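(* Let $\sum_{i=1}^n\alpha_i\cdot\lambda x.\vec t_i\in\mathcal S$ be a unitary distribution of closed abstractions. Then it belongs to $[\![\sharp\mathbb B\Rightarrow\sharp\mathbb B]\!]$ if and only if it represents a unitary operator $F:\mathbb C^2\to\mathbb C^2$.
   Context: Calculus. Fix a countably infinite set of variables. Pure values: $v,w::=x\mid\lambda x.\vec{s}\mid *\mid (v_1,v_2)\mid \mathtt{inl}(v)\mid\mathtt{inr}(v)$. Pure terms: $s,t::=v\mid s\,t\mid t;\vec{s}\mid \mathtt{let}\,(x_1,x_2)=t\,\mathtt{in}\,\vec{s}\mid \mathtt{match}\,t\,\{\mathtt{inl}\,x_1\mapsto\vec{s}_1\mid\mathtt{inr}\,x_2\mapsto\vec{s}_2\}$. Term distributions: $\vec{t}::=\vec{0}\mid t\mid \vec{s}+\vec{t}\mid\alpha\cdot\vec{t}$ ($\alpha\in\mathbb{C}$); value distributions are built from pure values only. Top-level distributions are considered modulo the congruence $\equiv$ of weak vector spaces (commutative monoid axioms for $+,\vec 0$; $1\cdot\vec t\equiv\vec t$; $\alpha\cdot(\beta\cdot\vec t)\equiv\alpha\beta\cdot\vec t$; $(\alpha+\beta)\cdot\vec t\equiv\alpha\cdot\vec t+\beta\cdot\vec t$; $\alpha\cdot(\vec t_1+\vec t_2)\equiv\alpha\cdot\vec t_1+\alpha\cdot\vec t_2$), which does not act inside pure terms; $0\cdot t\not\equiv\vec 0$; each distribution has a unique canonical form $\sum_i\alpha_i t_i$ with distinct pure $t_i$. Constructs are extended by linearity (application is bilinear: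 $(\sum_k\gamma_k t_k)(\sum_l\delta_l s_l)=\sum_{k,l}\gamma_k\delta_l t_ks_l$; pairs bilinear; $\mathtt{inl},\mathtt{inr}$ linear; $\mathtt{let},\mathtt{match},;$ linear in their first argument). $\mathtt{tt}:=\mathtt{inl}( * )$, $\mathtt{ff}:=\mathtt{inr}( * )$. Bilinear substitution: $\vec t\langle x:=\vec w\rangle=\sum_j\beta_j\vec t[x:=w_j]$ for $\vec w=\sum_j\beta_jw_j$. Atomic evaluation $\triangleright$ is call-by-value ($\beta_v$: $(\lambda x.\vec t)v\triangleright\vec t[x:=v]$; $*;\vec s\triangleright\vec s$; let on pairs of values; match on $\mathtt{inl}(v)$/$\mathtt{inr}(v)$; congruence rules reducing the argument of an application first, then the function, and the scrutinee of $;$, let, match). $\vec t\succ\vec t'$ iff $\vec t\equiv\alpha\cdot s+\vec r$, $\vec t'\equiv\alpha\cdot\vec s'+\vec r$, $s\triangleright\vec s'$; $\succ^*$ is its reflexive-transitive closure. Semantics. For closed value distributions in canonical form, $\langle\sum_i\alpha_iv_i|\sum_j\beta_jw_j\rangle=\sum_{i,j}\overline{\alpha_i}\beta_j\delta_{v_i,w_j}$; $\mathcal S$ is the set of closed value distributions of norm $1$. $[\![\mathbb U]\!]=\{*\}$, $[\![A+B]\!]=\{\mathtt{inl}(\vec v):\vec v\in[\![A]\!]\}\cup\{\mathtt{inr}(\vec w):\vec w\in[\![B]\!]\}$, $[\![\sharp A]\!]=\mathrm{Span}([\![A]\!])\cap\mathcal S$, $\mathbb B=\mathbb U+\mathbb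 U$, and $[\![A\Rightarrow B]\!]=\{(\sum_{i=1}^n\alpha_i\cdot\lambda x.\vec t_i)\in\mathcal S:\forall\vec v\in[\![A]\!],\ (\sum_i\alpha_i\cdot\vec t_i\langle x:=\vec v\rangle)\Vdash B\}$, where $\vec t\Vdash A$ means $\vec t\succ^*\vec v$ for some $\vec v\in[\![A]\!]$. The Boolean projection $\pi_{\mathbb B}:\mathrm{Span}(\{\mathtt{tt},\mathtt{ff}\})\to\mathbb C^2$ sends $\alpha\cdot\mathtt{tt}\mapsto(\alpha,0)$, $\beta\cdot\mathtt{ff}\mapsto(0,\beta)$, $\alpha\cdot\mathtt{tt}+\beta\cdot\mathtt{ff}\mapsto(\alpha,\beta)$. A closed distribution $\vec t$ represents $F:\mathbb C^2\to\mathbb C^2$ if for all $\vec v\in\mathrm{Span}(\{\mathtt{tt},\mathtt{ff}\})$ there is $\vec w\in\mathrm{Span}(\{\mathtt{tt},\mathtt{ff}\})$ with $\vec t\,\vec v\succ^*\vec w$ and $\pi_{\mathbb B}(\vec w)=F(\pi_{\mathbb B}(\vec v))$. $F$ is unitary if it is linear and preserves the inner product of $\mathbb C^2$. *)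

theory Defs
  imports Complex_Main
begin

section \<open>Syntax (de Bruijn indices for the countably infinite set of variables)\<close>

text \<open>Binders: VLam binds index 0 in its body; LetP t s binds x1 as index 1 and x2 as
  index 0 in s; each branch of Match binds one variable (index 0).\<close>

datatype val = VVar nat | VLam tdist | VStar | VPair val val | VInl val | VInr val
and trm = Val val | App trm trm | Seq trm tdist | LetP trm tdist | Match trm tdist tdist
and tdist = DZero | DT trm | DPlus tdist tdist | DScal complex tdist

primrec lift_v :: "nat \<Rightarrow> val \<Rightarrow> val"
  and lift_t :: "nat \<Rightarrow> trm \<Rightarrow> trm"
  and lift_d :: "nat \<Rightarrow> tdist \<Rightarrow> tdist" where
  "lift_v k (VVar i) = (if i < k then VVar i else VVar (Suc i))"
| "lift_v k (VLam b) = VLam (lift_d (Suc k) b)"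
| "lift_v k VStar = VStar"
| "lift_v k (VPair a b) = VPair (lift_v k a) (lift_v k b)"
| "lift_v k (VInl a) = VInl (lift_v k a)"
| "lift_v k (VInr a) = VInr (lift_v k a)"
| "lift_t k (Val v) = Val (lift_v k v)"
| "lift_t k (App s t) = App (lift_t k s) (lift_t k t)"
| "lift_t k (Seq t s) = Seq (lift_t k t) (lift_d k s)"
| "lift_t k (LetP t s) = LetP (lift_t k t) (lift_d (k + 2) s)"
| "lift_t k (Match t s1 s2) = Match (lift_t k t) (lift_d (Suc k) s1) (lift_d (Suc k) s2)"
| "lift_d k DZero = DZero"
| "lift_d k (DT t) = DT (lift_t k t)"
| "lift_d k (DPlus a b) = DPlus (lift_d k a) (lift_d k b)"
| "lift_d k (DScal \<alpha> a) = DScal \<alpha> (lift_d k a)"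

primrec subst_v :: "nat \<Rightarrow> val \<Rightarrow> val \<Rightarrow> val"
  and subst_t :: "nat \<Rightarrow> val \<Rightarrow> trm \<Rightarrow> trm"
  and subst_d :: "nat \<Rightarrow> val \<Rightarrow> tdist \<Rightarrow> tdist" where
  "subst_v k u (VVar i) = (if i < k then VVar i else if i = k then u else VVar (i - 1))"
| "subst_v k u (VLam b) = VLam (subst_d (Suc k) (lift_v 0 u) b)"
| "subst_v k u VStar = VStar"
| "subst_v k u (VPair a b) = VPair (subst_v k u a) (subst_v k u b)"
| "subst_v k u (VInl a) = VInl (subst_v k u a)"
| "subst_v k u (VInr a) = VInr (subst_v k u a)"
| "subst_t k u (Val v) = Val (subst_v k u v)"
| "subst_t k u (App s t) = App (subst_t k u s) (subst_t k u t)"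
| "subst_t k u (Seq t s) = Seq (subst_t k u t) (subst_d k u s)"
| "subst_t k u (LetP t s) = LetP (subst_t k u t) (subst_d (k + 2) (lift_v 0 (lift_v 0 u)) s)"
| "subst_t k u (Match t s1 s2) =
     Match (subst_t k u t) (subst_d (Suc k) (lift_v 0 u) s1) (subst_d (Suc k) (lift_v 0 u) s2)"
| "subst_d k u DZero = DZero"
| "subst_d k u (DT t) = DT (subst_t k u t)"
| "subst_d k u (DPlus a b) = DPlus (subst_d k u a) (subst_d k u b)"
| "subst_d k u (DScal \<alpha> a) = DScal \<alpha> (subst_d k u a)"

primrec closed_v :: "nat \<Rightarrow> val \<Rightarrow> bool"
  and closed_t :: "nat \<Rightarrow> trm \<Rightarrow> bool"
  and closed_d :: "nat \<Rightarrow> tdist \<Rightarrow> bool" where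
  "closed_v k (VVar i) = (i < k)"
| "closed_v k (VLam b) = closed_d (Suc k) b"
| "closed_v k VStar = True"
| "closed_v k (VPair a b) = (closed_v k a \<and> closed_v k b)"
| "closed_v k (VInl a) = closed_v k a"
| "closed_v k (VInr a) = closed_v k a"
| "closed_t k (Val v) = closed_v k v"
| "closed_t k (App s t) = (closed_t k s \<and> closed_t k t)"
| "closed_t k (Seq t s) = (closed_t k t \<and> closed_d k s)"
| "closed_t k (LetP t s) = (closed_t k t \<and> closed_d (k + 2) s)"
| "closed_t k (Match t s1 s2) = (closed_t k t \<and> closed_d (Suc k) s1 \<and> closed_d (Suc k) s2)"
| "closed_d k DZero = True"
| "closed_d k (DT t) = closed_t k t"
| "closed_d k (DPlus a b) = (closed_d k a \<and> closed_d k b)"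
| "closed_d k (DScal \<alpha> a) = closed_d k a"

section \<open>Weak vector space structure on top-level distributions\<close>

text \<open>Canonical form: the finitely many distinct pure terms occurring, with their
  coefficients (a coefficient may be 0, since 0 t is not congruent to the zero distribution).\<close>
fun canon :: "tdist \<Rightarrow> trm \<Rightarrow> complex option" where
  "canon DZero = (\<lambda>_. None)"
| "canon (DT t) = (\<lambda>s. if s = t then Some 1 else None)"
| "canon (DPlus a b) = (\<lambda>s. case (canon a s, canon b s) of
      (None, y) \<Rightarrow> y | (Some x, None) \<Rightarrow> Some x | (Some x, Some y) \<Rightarrow> Some (x + y))"
| "canon (DScal \<alpha> a) = (\<lambda>s. map_option (\<lambda>x. \<alpha> * x) (canon a s))"

definition deq :: "tdist \<Rightarrow> tdist \<Rightarrow> bool" (infix "\<equiv>\<^sub>d" 50) where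
  "a \<equiv>\<^sub>d b \<longleftrightarrow> canon a = canon b"

fun atoms :: "tdist \<Rightarrow> trm set" where
  "atoms DZero = {}"
| "atoms (DT t) = {t}"
| "atoms (DPlus a b) = atoms a \<union> atoms b"
| "atoms (DScal \<alpha> a) = atoms a"

fun dmap :: "(trm \<Rightarrow> trm) \<Rightarrow> tdist \<Rightarrow> tdist" where
  "dmap f DZero = DZero"
| "dmap f (DT t) = DT (f t)"
| "dmap f (DPlus a b) = DPlus (dmap f a) (dmap f b)"
| "dmap f (DScal \<alpha> a) = DScal \<alpha> (dmap f a)"

fun dbind :: "(trm \<Rightarrow> tdist) \<Rightarrow> tdist \<Rightarrow> tdist" where
  "dbind f DZero = DZero"
| "dbind f (DT t) = f t"
| "dbind f (DPlus a b) = DPlus (dbind f a) (dbind f b)"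
| "dbind f (DScal \<alpha> a) = DScal \<alpha> (dbind f a)"

definition dapp :: "tdist \<Rightarrow> tdist \<Rightarrow> tdist" where
  "dapp a b = dbind (\<lambda>t. dmap (\<lambda>s. App t s) b) a"

definition bsubst :: "tdist \<Rightarrow> tdist \<Rightarrow> tdist" where
  "bsubst b w = dbind (\<lambda>t. case t of Val u \<Rightarrow> subst_d 0 u b | _ \<Rightarrow> DZero) w"

definition inl_t :: "trm \<Rightarrow> trm" where
  "inl_t t = (case t of Val v \<Rightarrow> Val (VInl v) | _ \<Rightarrow> t)"
definition inr_t :: "trm \<Rightarrow> trm" where
  "inr_t t = (case t of Val v \<Rightarrow> Val (VInr v) | _ \<Rightarrow> t)"

definition tt :: trm where "tt = Val (VInl VStar)"
definition ff :: trm where "ff = Val (VInr VStar)"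

section \<open>Call-by-value evaluation\<close>

inductive atred :: "trm \<Rightarrow> tdist \<Rightarrow> bool" where
  beta: "atred (App (Val (VLam b)) (Val v)) (subst_d 0 v b)"
| seq: "atred (Seq (Val VStar) s) s"
| letp: "atred (LetP (Val (VPair v1 v2)) s) (subst_d 0 v1 (subst_d 0 (lift_v 0 v2) s))"
| match_inl: "atred (Match (Val (VInl v)) s1 s2) (subst_d 0 v s1)"
| match_inr: "atred (Match (Val (VInr v)) s1 s2) (subst_d 0 v s2)"
| app_arg: "atred t t' \<Longrightarrow> atred (App s t) (dapp (DT s) t')"
| app_fun: "atred s s' \<Longrightarrow> atred (App s (Val v)) (dapp s' (DT (Val v)))"
| seq_c: "atred t t' \<Longrightarrow> atred (Seq t s) (dmap (\<lambda>u. Seq u s) t')"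
| let_c: "atred t t' \<Longrightarrow> atred (LetP t s) (dmap (\<lambda>u. LetP u s) t')"
| match_c: "atred t t' \<Longrightarrow> atred (Match t s1 s2) (dmap (\<lambda>u. Match u s1 s2) t')"

definition step :: "tdist \<Rightarrow> tdist \<Rightarrow> bool" where
  "step d d' \<longleftrightarrow> (\<exists>\<alpha> s r s'. d \<equiv>\<^sub>d DPlus (DScal \<alpha> (DT s)) r \<and>
                      d' \<equiv>\<^sub>d DPlus (DScal \<alpha> s') r \<and> atred s s')"

definition reds :: "tdist \<Rightarrow> tdist \<Rightarrow> bool" where
  "reds = (\<lambda>a b. step a b \<or> a \<equiv>\<^sub>d b)\<^sup>*\<^sup>*"

section \<open>Semantics\<close>

definition is_val :: "trm \<Rightarrow> bool" where
  "is_val t \<longleftrightarrow> (\<exists>v. t = Val v)"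

definition is_lam :: "trm \<Rightarrow> bool" where
  "is_lam t \<longleftrightarrow> (\<exists>b. t = Val (VLam b))"

definition coef :: "tdist \<Rightarrow> trm \<Rightarrow> complex" where
  "coef d t = (case canon d t of None \<Rightarrow> 0 | Some a \<Rightarrow> a)"

definition dinner :: "tdist \<Rightarrow> tdist \<Rightarrow> complex" where
  "dinner a b = (\<Sum>t\<in>atoms a \<inter> atoms b. cnj (coef a t) * coef b t)"

definition closed_val_dist :: "tdist \<Rightarrow> bool" where
  "closed_val_dist d \<longleftrightarrow> (\<forall>t\<in>atoms d. is_val t \<and> closed_t 0 t)"

definition S :: "tdist set" where
  "S = {d. closed_val_dist d \<and> dinner d d = 1}"

fun dsum :: "tdist list \<Rightarrow> tdist" where
  "dsum [] = DZero"
| "dsum (d # ds) = DPlus d (dsum ds)"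

definition Span :: "tdist set \<Rightarrow> tdist set" where
  "Span X = {d. \<exists>ds cs. ds \<noteq> [] \<and> length cs = length ds \<and> set ds \<subseteq> X \<and>
                         d \<equiv>\<^sub>d dsum (map2 DScal cs ds)}"

datatype ty = TU | TSum ty ty | TSharp ty | TArr ty ty

definition TB :: ty where "TB = TSum TU TU"

definition realizes :: "tdist \<Rightarrow> tdist set \<Rightarrow> bool" where
  "realizes t X \<longleftrightarrow> (\<exists>v\<in>X. reds t v)"

text \<open>For a distribution of abstractions sum alpha_i (lam x. t_i) and a value distribution v,
  the distribution sum alpha_i t_i<x:=v>.\<close>
definition app_body :: "tdist \<Rightarrow> tdist \<Rightarrow> tdist" where
  "app_body d v = dbind (\<lambda>t. case t of Val (VLam b) \<Rightarrow> bsubst b v | _ \<Rightarrow> DZero) d"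

primrec sem :: "ty \<Rightarrow> tdist set" where
  "sem TU = {d. d \<equiv>\<^sub>d DT (Val VStar)}"
| "sem (TSum A B) = {d. \<exists>v\<in>sem A. d \<equiv>\<^sub>d dmap inl_t v} \<union> {d. \<exists>w\<in>sem B. d \<equiv>\<^sub>d dmap inr_t w}"
| "sem (TSharp A) = Span (sem A) \<inter> S"
| "sem (TArr A B) = {d \<in> S. (\<forall>t\<in>atoms d. is_lam t) \<and>
                              (\<forall>v\<in>sem A. realizes (app_body d v) (sem B))}"

definition SpanB :: "tdist set" where
  "SpanB = Span {DT tt, DT ff}"

definition piB :: "tdist \<Rightarrow> complex \<times> complex" where
  "piB d = (coef d tt, coef d ff)"

definition represents :: "tdist \<Rightarrow> (complex \<times> complex \<Rightarrow> complex \<times> complex) \<Rightarrow> bool" where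
  "represents t F \<longleftrightarrow> (\<forall>v\<in>SpanB. \<exists>w\<in>SpanB. reds (dapp t v) w \<and> piB w = F (piB v))"

definition c2_inner :: "complex \<times> complex \<Rightarrow> complex \<times> complex \<Rightarrow> complex" where
  "c2_inner u v = cnj (fst u) * fst v + cnj (snd u) * snd v"

definition c2_linear :: "(complex \<times> complex \<Rightarrow> complex \<times> complex) \<Rightarrow> bool" where
  "c2_linear F \<longleftrightarrow> (\<forall>u v. F (fst u + fst v, snd u + snd v) = (fst (F u) + fst (F v), snd (F u) + snd (F v)))
                  \<and> (\<forall>a u. F (a * fst u, a * snd u) = (a * fst (F u), a * snd (F u)))"

definition unitary :: "(complex \<times> complex \<Rightarrow> complex \<times> complex) \<Rightarrow> bool" where
  "unitary F \<longleftrightarrow> c2_linear F \<and> (\<forall>u v. c2_inner (F u) (F v) = c2_inner u v)"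

end

theory Submission
  imports Defs
begin


lemma canon_None': "t \<in> atoms d \<longleftrightarrow> canon d t \<noteq> None"
  by (induction d arbitrary: t rule: atoms.induct) (auto split: option.splits)

lemma canon_None: "canon d t = None \<longleftrightarrow> t \<notin> atoms d"
  using canon_None' by blast

lemma canon_Some: "t \<in> atoms d \<Longrightarrow> canon d t = Some (coef d t)"
  using canon_None[of d t] by (auto simp: coef_def split: option.split)

lemma coef_notin: "t \<notin> atoms d \<Longrightarrow> coef d t = 0"
  using canon_None[of d t] by (auto simp: coef_def)

lemma coef_DZero[simp]: "coef DZero t = 0"
  by (simp add: coef_def)
lemma coef_DT[simp]: "coef (DT s) t = (if t = s then 1 else 0)"
  by (simp add: coef_def)
lemma coef_DPlus[simp]: "coef (DPlus a b) t = coef a t + coef b t"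
  by (simp add: coef_def split: option.split)
lemma coef_DScal[simp]: "coef (DScal \<alpha> a) t = \<alpha> * coef a t"
  by (simp add: coef_def split: option.split)

lemma finite_atoms[simp]: "finite (atoms d)"
  by (induction d rule: atoms.induct) auto

lemma deq_iff: "a \<equiv>\<^sub>d b \<longleftrightarrow> atoms a = atoms b \<and> coef a = coef b"
proof
  assume "a \<equiv>\<^sub>d b"
  then have c: "canon a = canon b" by (simp add: deq_def)
  have "atoms a = atoms b"
  proof (rule set_eqI)
    fix t show "t \<in> atoms a \<longleftrightarrow> t \<in> atoms b" unfolding canon_None' c ..
  qed
  moreover have "coef a = coef b" using c by (simp add: coef_def fun_eq_iff)
  ultimately show "atoms a = atoms b \<and> coef a = coef b" by simp
next
  assume h: "atoms a = atoms b \<and> coef a = coef b"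
  show "a \<equiv>\<^sub>d b" unfolding deq_def
  proof
    fix t show "canon a t = canon b t"
    proof (cases "t \<in> atoms a")
      case True
      then show ?thesis using h canon_Some[of t a] canon_Some[of t b] by simp
    next
      case False
      then show ?thesis using h canon_None[of a t] canon_None[of b t] by simp
    qed
  qed
qed

lemma deq_refl[simp]: "a \<equiv>\<^sub>d a" by (simp add: deq_def)
lemma deq_sym: "a \<equiv>\<^sub>d b \<Longrightarrow> b \<equiv>\<^sub>d a" by (simp add: deq_def)
lemma deq_trans: "a \<equiv>\<^sub>d b \<Longrightarrow> b \<equiv>\<^sub>d c \<Longrightarrow> a \<equiv>\<^sub>d c" by (simp add: deq_def)

lemma atoms_dbind: "atoms (dbind f d) = (\<Union>t\<in>atoms d. atoms (f t))"
  by (induction d rule: atoms.induct) auto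

lemma coef_dbind: "coef (dbind f d) u = (\<Sum>t\<in>atoms d. coef d t * coef (f t) u)"
proof (induction d rule: atoms.induct)
  case (3 a b)
  have fa: "(\<Sum>t\<in>atoms a \<union> atoms b. coef a t * coef (f t) u) = (\<Sum>t\<in>atoms a. coef a t * coef (f t) u)"
    by (rule sum.mono_neutral_right) (auto simp: coef_notin)
  have fb: "(\<Sum>t\<in>atoms a \<union> atoms b. coef b t * coef (f t) u) = (\<Sum>t\<in>atoms b. coef b t * coef (f t) u)"
    by (rule sum.mono_neutral_right) (auto simp: coef_notin)
  show ?case using 3 fa fb by (simp add: distrib_right sum.distrib)
next
  case (4 \<alpha> a)
  then show ?case by (simp add: sum_distrib_left mult.assoc)
qed auto

lemma dmap_dbind: "dmap f d = dbind (\<lambda>t. DT (f t)) d"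
  by (induction d rule: atoms.induct) auto

lemma dbind_assoc: "dbind g (dbind f d) = dbind (\<lambda>t. dbind g (f t)) d"
  by (induction d rule: atoms.induct) auto

lemma dbind_DT: "dbind DT d = d"
  by (induction d rule: atoms.induct) auto

lemma dbind_cong: "(\<And>t. t \<in> atoms d \<Longrightarrow> f t = g t) \<Longrightarrow> dbind f d = dbind g d"
  by (induction d rule: atoms.induct) auto

lemma dbind_cong_deq: "(\<And>t. t \<in> atoms d \<Longrightarrow> f t \<equiv>\<^sub>d g t) \<Longrightarrow> dbind f d \<equiv>\<^sub>d dbind g d"
  unfolding deq_iff by (auto simp: atoms_dbind coef_dbind fun_eq_iff intro!: sum.cong)

lemma dbind_deq: "a \<equiv>\<^sub>d b \<Longrightarrow> dbind f a \<equiv>\<^sub>d dbind f b"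
  unfolding deq_iff by (auto simp: atoms_dbind coef_dbind fun_eq_iff)

lemma deq_plus: "a \<equiv>\<^sub>d a' \<Longrightarrow> b \<equiv>\<^sub>d b' \<Longrightarrow> DPlus a b \<equiv>\<^sub>d DPlus a' b'"
  by (simp add: deq_def)
lemma deq_scal: "a \<equiv>\<^sub>d a' \<Longrightarrow> DScal c a \<equiv>\<^sub>d DScal c a'"
  by (simp add: deq_def)

lemma atred_val: "\<not> atred (Val v) D"
  by (auto elim: atred.cases)

lemma atred_det: "atred s D1 \<Longrightarrow> atred s D2 \<Longrightarrow> D1 = D2"
proof (induction arbitrary: D2 rule: atred.induct)
  case (beta b v)
  from beta.prems show ?case by (cases rule: atred.cases) (auto simp: atred_val)
next
  case seq from seq.prems show ?case by (cases rule: atred.cases) (auto simp: atred_val)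
next
  case letp from letp.prems show ?case by (cases rule: atred.cases) (auto simp: atred_val)
next
  case match_inl from match_inl.prems show ?case by (cases rule: atred.cases) (auto simp: atred_val)
next
  case match_inr from match_inr.prems show ?case by (cases rule: atred.cases) (auto simp: atred_val)
next
  case app_arg from app_arg.prems show ?case by (cases rule: atred.cases) (use app_arg.hyps atred_val in \<open>auto dest: app_arg.IH\<close>)
next
  case app_fun from app_fun.prems show ?case by (cases rule: atred.cases) (use app_fun.hyps atred_val in \<open>auto dest: app_fun.IH\<close>)
next
  case seq_c from seq_c.prems show ?case by (cases rule: atred.cases) (use seq_c.hyps atred_val in \<open>auto dest: seq_c.IH\<close>)
next
  case let_c from let_c.prems show ?case by (cases rule: atred.cases) (use let_c.hyps atred_val in \<open>auto dest: let_c.IH\<close>)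
next
  case match_c from match_c.prems show ?case by (cases rule: atred.cases) (use match_c.hyps atred_val in \<open>auto dest: match_c.IH\<close>)
qed


lemma step_plusL: "step a a' \<Longrightarrow> step (DPlus a b) (DPlus a' b)"
  unfolding step_def
proof (elim exE conjE)
  fix \<alpha> s r s' assume h: "a \<equiv>\<^sub>d DPlus (DScal \<alpha> (DT s)) r" "a' \<equiv>\<^sub>d DPlus (DScal \<alpha> s') r" "atred s s'"
  show "\<exists>\<alpha> s r s'. DPlus a b \<equiv>\<^sub>d DPlus (DScal \<alpha> (DT s)) r \<and> DPlus a' b \<equiv>\<^sub>d DPlus (DScal \<alpha> s') r \<and> atred s s'"
    apply (rule exI[of _ \<alpha>], rule exI[of _ s], rule exI[of _ "DPlus r b"], rule exI[of _ s'])
    using h by (auto simp: deq_iff fun_eq_iff algebra_simps)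
qed

lemma step_plusR: "step a a' \<Longrightarrow> step (DPlus b a) (DPlus b a')"
  unfolding step_def
proof (elim exE conjE)
  fix \<alpha> s r s' assume h: "a \<equiv>\<^sub>d DPlus (DScal \<alpha> (DT s)) r" "a' \<equiv>\<^sub>d DPlus (DScal \<alpha> s') r" "atred s s'"
  show "\<exists>\<alpha> s r s'. DPlus b a \<equiv>\<^sub>d DPlus (DScal \<alpha> (DT s)) r \<and> DPlus b a' \<equiv>\<^sub>d DPlus (DScal \<alpha> s') r \<and> atred s s'"
    apply (rule exI[of _ \<alpha>], rule exI[of _ s], rule exI[of _ "DPlus b r"], rule exI[of _ s'])
    using h by (auto simp: deq_iff fun_eq_iff algebra_simps)
qed

lemma step_scal: "step a a' \<Longrightarrow> step (DScal c a) (DScal c a')"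
  unfolding step_def
proof (elim exE conjE)
  fix \<alpha> s r s' assume h: "a \<equiv>\<^sub>d DPlus (DScal \<alpha> (DT s)) r" "a' \<equiv>\<^sub>d DPlus (DScal \<alpha> s') r" "atred s s'"
  show "\<exists>\<alpha> s r s'. DScal c a \<equiv>\<^sub>d DPlus (DScal \<alpha> (DT s)) r \<and> DScal c a' \<equiv>\<^sub>d DPlus (DScal \<alpha> s') r \<and> atred s s'"
    apply (rule exI[of _ "c * \<alpha>"], rule exI[of _ s], rule exI[of _ "DScal c r"], rule exI[of _ s'])
    using h by (auto simp: deq_iff fun_eq_iff algebra_simps)
qed

definition rel1 :: "tdist \<Rightarrow> tdist \<Rightarrow> bool" where
  "rel1 a b \<longleftrightarrow> step a b \<or> a \<equiv>\<^sub>d b"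

lemma reds_rel1: "reds = rel1\<^sup>*\<^sup>*"
  unfolding reds_def rel1_def[abs_def] by simp

lemma reds_lift:
  assumes "\<And>a b. rel1 a b \<Longrightarrow> rel1 (h a) (h b)" "reds x y"
  shows "reds (h x) (h y)"
  using assms(2) unfolding reds_rel1
  by (induction rule: rtranclp_induct) (auto intro: rtranclp.rtrancl_into_rtrancl assms(1))

lemma reds_plusL: "reds a a' \<Longrightarrow> reds (DPlus a b) (DPlus a' b)"
  by (rule reds_lift[where h="\<lambda>x. DPlus x b"]) (auto simp: rel1_def intro: step_plusL deq_plus)
lemma reds_plusR: "reds a a' \<Longrightarrow> reds (DPlus b a) (DPlus b a')"
  by (rule reds_lift[where h="\<lambda>x. DPlus b x"]) (auto simp: rel1_def intro: step_plusR deq_plus)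
lemma reds_scal: "reds a a' \<Longrightarrow> reds (DScal c a) (DScal c a')"
  by (rule reds_lift[where h="\<lambda>x. DScal c x"]) (auto simp: rel1_def intro: step_scal deq_scal)

lemma reds_trans: "reds a b \<Longrightarrow> reds b c \<Longrightarrow> reds a c"
  unfolding reds_def by (rule rtranclp_trans)

lemma reds_refl: "reds a a"
  unfolding reds_def by simp

lemma reds_deq: "a \<equiv>\<^sub>d b \<Longrightarrow> reds a b"
  unfolding reds_def by (rule r_into_rtranclp) simp

lemma reds_step: "step a b \<Longrightarrow> reds a b"
  unfolding reds_def by (rule r_into_rtranclp) simp

lemma step_atred: "atred s D \<Longrightarrow> step (DT s) D"
  unfolding step_def
  apply (rule exI[of _ 1], rule exI[of _ s], rule exI[of _ DZero], rule exI[of _ D])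
  by (auto simp: deq_iff fun_eq_iff)

lemma reds_dbind: "(\<And>t. t \<in> atoms D \<Longrightarrow> reds (DT t) (g t)) \<Longrightarrow> reds D (dbind g D)"
proof (induction D rule: atoms.induct)
  case 1 then show ?case by (simp add: reds_refl)
next
  case (2 t) then show ?case by simp
next
  case (3 a b)
  then have "reds (DPlus a b) (DPlus (dbind g a) b)" by (intro reds_plusL) auto
  moreover have "reds (DPlus (dbind g a) b) (DPlus (dbind g a) (dbind g b))"
    using 3 by (intro reds_plusR) auto
  ultimately show ?case by (auto intro: reds_trans)
next
  case (4 \<alpha> a) then show ?case by (auto intro: reds_scal)
qed

section \<open>Normal forms\<close>

inductive N :: "trm \<Rightarrow> tdist \<Rightarrow> bool" where
  nval: "N (Val v) (DT (Val v))"
| nred: "atred s D \<Longrightarrow> (\<forall>t\<in>atoms D. N t (g t)) \<Longrightarrow> N s (dbind g D)"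

lemma N_det: "N s W1 \<Longrightarrow> N s W2 \<Longrightarrow> W1 \<equiv>\<^sub>d W2"
proof (induction arbitrary: W2 rule: N.induct)
  case (nval v)
  from nval.prems show ?case by (cases rule: N.cases) (auto simp: atred_val)
next
  case (nred s D g)
  from nred.prems show ?case
  proof (cases rule: N.cases)
    case (nval v) then show ?thesis using nred.hyps atred_val by auto
  next
    case (nred D' g')
    then have "D' = D" using nred.hyps(1) atred_det by blast
    then show ?thesis using nred nred.IH by (auto intro!: dbind_cong_deq)
  qed
qed

lemma N_reds: "N s W \<Longrightarrow> reds (DT s) W"
proof (induction rule: N.induct)
  case (nval v) then show ?case by (simp add: reds_refl)
next
  case (nred s D g)
  then show ?case using reds_dbind[of D g] step_atred[of s D]
    by (auto intro: reds_trans reds_step)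
qed

definition normalizing :: "trm \<Rightarrow> bool" where
  "normalizing s \<longleftrightarrow> (\<exists>W. N s W)"

definition nf :: "trm \<Rightarrow> tdist" where
  "nf s = (SOME W. N s W)"

lemma N_nf: "normalizing s \<Longrightarrow> N s (nf s)"
  unfolding normalizing_def nf_def by (rule someI_ex)

lemma N_nf_deq: "N s W \<Longrightarrow> nf s \<equiv>\<^sub>d W"
  using N_nf N_det normalizing_def by blast

definition NFd :: "tdist \<Rightarrow> tdist \<Rightarrow> bool" where
  "NFd d w \<longleftrightarrow> (\<forall>t\<in>atoms d. normalizing t) \<and> w \<equiv>\<^sub>d dbind nf d"

lemma NFd_reds: "NFd d w \<Longrightarrow> reds d w"
proof -
  assume "NFd d w"
  then have a: "\<forall>t\<in>atoms d. normalizing t" and b: "w \<equiv>\<^sub>d dbind nf d" by (auto simp: NFd_def)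
  have "reds d (dbind nf d)" by (rule reds_dbind) (use a N_nf N_reds in blast)
  then show ?thesis using b by (auto intro: reds_trans reds_deq deq_sym)
qed

lemma NFd_deq: "d \<equiv>\<^sub>d d' \<Longrightarrow> NFd d' w \<Longrightarrow> NFd d w"
  unfolding NFd_def using dbind_deq[of d d' nf]
  by (auto simp: deq_iff)

lemma normalizing_step: "atred s D \<Longrightarrow> (\<forall>t\<in>atoms D. normalizing t) \<Longrightarrow> normalizing s \<and> nf s \<equiv>\<^sub>d dbind nf D"
proof -
  assume h: "atred s D" "\<forall>t\<in>atoms D. normalizing t"
  then have "N s (dbind nf D)" by (intro nred) (auto intro: N_nf)
  then show ?thesis using N_nf_deq normalizing_def by blast
qed

lemma NFd_step: "step d d' \<Longrightarrow> NFd d' w \<Longrightarrow> NFd d w"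
proof -
  assume "step d d'" and n: "NFd d' w"
  then obtain \<alpha> s r s' where h: "d \<equiv>\<^sub>d DPlus (DScal \<alpha> (DT s)) r" "d' \<equiv>\<^sub>d DPlus (DScal \<alpha> s') r" "atred s s'"
    unfolding step_def by blast
  have n2: "NFd (DPlus (DScal \<alpha> s') r) w"
    using n h(2) unfolding NFd_def using dbind_deq[of d' "DPlus (DScal \<alpha> s') r" nf]
    by (auto simp: deq_iff)
  then have ns': "\<forall>t\<in>atoms s'. normalizing t" and nr: "\<forall>t\<in>atoms r. normalizing t"
    and w: "w \<equiv>\<^sub>d DPlus (DScal \<alpha> (dbind nf s')) (dbind nf r)"
    by (auto simp: NFd_def)
  from normalizing_step[OF h(3) ns'] have ns: "normalizing s" "nf s \<equiv>\<^sub>d dbind nf s'" by auto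
  have "NFd (DPlus (DScal \<alpha> (DT s)) r) w"
    unfolding NFd_def using ns nr w
    by (auto simp: deq_iff)
  then show ?thesis using NFd_deq h(1) by blast
qed

lemma reds_NFd: "reds d w \<Longrightarrow> (\<forall>t\<in>atoms w. is_val t) \<Longrightarrow> NFd d w"
  unfolding reds_def
proof (induction rule: converse_rtranclp_induct)
  case base
  have "\<forall>t\<in>atoms w. normalizing t \<and> nf t \<equiv>\<^sub>d DT t"
  proof
    fix t assume "t \<in> atoms w"
    then obtain v where tv: "t = Val v" using base by (auto simp: is_val_def)
    then have "N t (DT t)" by (simp add: nval)
    then show "normalizing t \<and> nf t \<equiv>\<^sub>d DT t" using N_nf_deq normalizing_def by blast
  qed
  moreover then have "dbind nf w \<equiv>\<^sub>d dbind DT w" by (auto intro: dbind_cong_deq)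
  ultimately show ?case by (auto simp: NFd_def dbind_DT intro: deq_sym)
next
  case (step y z)
  then show ?case using NFd_step NFd_deq by blast
qed



definition BS :: "trm \<Rightarrow> trm \<Rightarrow> tdist" where
  "BS t x = (case t of Val (VLam b) \<Rightarrow> (case x of Val u \<Rightarrow> subst_d 0 u b | _ \<Rightarrow> DZero) | _ \<Rightarrow> DZero)"

definition R :: "tdist \<Rightarrow> tdist \<Rightarrow> tdist" where
  "R d v = dbind (\<lambda>t. dbind (\<lambda>x. dbind nf (BS t x)) v) d"

definition NORM :: "tdist \<Rightarrow> tdist \<Rightarrow> bool" where
  "NORM d v \<longleftrightarrow> (\<forall>t\<in>atoms d. \<forall>x\<in>atoms v. \<forall>y\<in>atoms (BS t x). normalizing y)"

lemma app_body_eq: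
  assumes "\<forall>t\<in>atoms d. is_lam t"
  shows "app_body d v = dbind (\<lambda>t. dbind (BS t) v) d"
  unfolding app_body_def
proof (rule dbind_cong)
  fix t assume "t \<in> atoms d"
  then obtain b where "t = Val (VLam b)" using assms by (auto simp: is_lam_def)
  then show "(case t of Val (VLam b) \<Rightarrow> bsubst b v | _ \<Rightarrow> DZero) = dbind (BS t) v"
  proof -
    have "BS (Val (VLam b)) = (\<lambda>x. case x of Val u \<Rightarrow> subst_d 0 u b | _ \<Rightarrow> DZero)"
      by (rule ext) (simp add: BS_def)
    then show ?thesis using \<open>t = Val (VLam b)\<close> by (simp add: bsubst_def)
  qed
qed

lemma L1:
  assumes "\<forall>t\<in>atoms d. is_lam t"
  shows "NFd (app_body d v) w \<longleftrightarrow> NORM d v \<and> w \<equiv>\<^sub>d R d v"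
  unfolding app_body_eq[OF assms] NFd_def NORM_def R_def
  by (simp add: atoms_dbind dbind_assoc)

lemma app_norm:
  assumes "is_lam t" "is_val x"
  shows "normalizing (App t x) \<longleftrightarrow> (\<forall>y\<in>atoms (BS t x). normalizing y)"
    and "normalizing (App t x) \<Longrightarrow> nf (App t x) \<equiv>\<^sub>d dbind nf (BS t x)"
proof -
  obtain b where b: "t = Val (VLam b)" using assms by (auto simp: is_lam_def)
  obtain u where u: "x = Val u" using assms by (auto simp: is_val_def)
  have ar: "atred (App t x) (BS t x)" using b u by (simp add: BS_def atred.beta)
  show 1: "normalizing (App t x) \<longleftrightarrow> (\<forall>y\<in>atoms (BS t x). normalizing y)"
  proof
    assume "normalizing (App t x)"
    then obtain W where "N (App t x) W" by (auto simp: normalizing_def)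
    then show "\<forall>y\<in>atoms (BS t x). normalizing y"
    proof (cases rule: N.cases)
      case (nred D g)
      then have "D = BS t x" using ar atred_det by blast
      then show ?thesis using nred by (auto simp: normalizing_def)
    qed
  next
    assume "\<forall>y\<in>atoms (BS t x). normalizing y"
    then show "normalizing (App t x)" using normalizing_step[OF ar] by blast
  qed
  assume "normalizing (App t x)"
  then show "nf (App t x) \<equiv>\<^sub>d dbind nf (BS t x)" using 1 normalizing_step[OF ar] by blast
qed

lemma L2:
  assumes "\<forall>t\<in>atoms d. is_lam t" "\<forall>x\<in>atoms v. is_val x"
  shows "NFd (dapp d v) w \<longleftrightarrow> NORM d v \<and> w \<equiv>\<^sub>d R d v"
proof -
  have e: "dapp d v = dbind (\<lambda>t. dbind (\<lambda>x. DT (App t x)) v) d"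
    by (simp add: dapp_def dmap_dbind)
  have n: "(\<forall>y\<in>atoms (dapp d v). normalizing y) \<longleftrightarrow> NORM d v"
    unfolding e NORM_def atoms_dbind using assms app_norm(1) by auto
  have "NORM d v \<Longrightarrow> dbind nf (dapp d v) \<equiv>\<^sub>d R d v"
    unfolding e R_def dbind_assoc
  proof (intro dbind_cong_deq)
    fix t x assume "NORM d v" "t \<in> atoms d" "x \<in> atoms v"
    then show "dbind nf (DT (App t x)) \<equiv>\<^sub>d dbind nf (BS t x)"
      using assms app_norm[of t x] by (auto simp: NORM_def)
  qed
  then show ?thesis unfolding NFd_def using n by (auto intro: deq_trans deq_sym)
qed

definition P :: "tdist \<Rightarrow> trm \<Rightarrow> trm \<Rightarrow> complex" where
  "P d x y = (\<Sum>t\<in>atoms d. coef d t * coef (dbind nf (BS t x)) y)"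

lemma tt_ff[simp]: "tt \<noteq> ff" "ff \<noteq> tt"
  by (auto simp: tt_def ff_def)

lemma sum_TF:
  assumes "atoms v \<subseteq> {tt, ff}"
  shows "(\<Sum>x\<in>atoms v. coef v x * K x) = coef v tt * K tt + coef v ff * K ff"
proof -
  have "(\<Sum>x\<in>atoms v. coef v x * K x) = (\<Sum>x\<in>{tt,ff}. coef v x * K x)"
    by (rule sum.mono_neutral_left) (use assms in \<open>auto simp: coef_notin\<close>)
  then show ?thesis by simp
qed

lemma coef_R:
  assumes "atoms v \<subseteq> {tt, ff}"
  shows "coef (R d v) y = coef v tt * P d tt y + coef v ff * P d ff y"
proof -
  have "coef (R d v) y = (\<Sum>t\<in>atoms d. coef d t * coef (dbind (\<lambda>x. dbind nf (BS t x)) v) y)"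
    unfolding R_def by (rule coef_dbind)
  also have "\<dots> = (\<Sum>t\<in>atoms d. coef d t * (coef v tt * coef (dbind nf (BS t tt)) y + coef v ff * coef (dbind nf (BS t ff)) y))"
    by (rule sum.cong[OF refl]) (simp only: coef_dbind[of _ v] sum_TF[OF assms])
  also have "\<dots> = coef v tt * P d tt y + coef v ff * P d ff y"
    unfolding P_def by (simp add: sum_distrib_left sum.distrib algebra_simps)
  finally show ?thesis .
qed

lemma atoms_R: "atoms (R d v) = (\<Union>x\<in>atoms v. atoms (R d (DT x)))"
  unfolding R_def atoms_dbind by auto



definition nrm :: "tdist \<Rightarrow> complex" where
  "nrm v = cnj (coef v tt) * coef v tt + cnj (coef v ff) * coef v ff"

lemma atoms_dsum: "length cs = length ds \<Longrightarrow> atoms (dsum (map2 DScal cs ds)) = (\<Union>x\<in>set ds. atoms x)"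
proof (induction ds arbitrary: cs)
  case Nil then show ?case by simp
next
  case (Cons a ds) then show ?case by (cases cs) auto
qed

lemma Span_char:
  assumes "\<forall>x\<in>X. atoms x = {tt} \<or> atoms x = {ff}" "DT tt \<in> X" "DT ff \<in> X"
  shows "v \<in> Span X \<longleftrightarrow> atoms v \<subseteq> {tt, ff} \<and> atoms v \<noteq> {}"
proof
  assume "v \<in> Span X"
  then obtain ds cs where h: "ds \<noteq> []" "length cs = length ds" "set ds \<subseteq> X" "v \<equiv>\<^sub>d dsum (map2 DScal cs ds)"
    unfolding Span_def by blast
  then have a: "atoms v = (\<Union>x\<in>set ds. atoms x)" using atoms_dsum by (simp add: deq_iff)
  obtain x where "x \<in> set ds" using h(1) by (cases ds) auto
  then have "x \<in> X" using h(3) by blast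
  then have "atoms x \<noteq> {}" using assms(1) by fastforce
  moreover have "atoms x \<subseteq> atoms v" using a \<open>x \<in> set ds\<close> by blast
  moreover have "atoms v \<subseteq> {tt, ff}" using a h(3) assms(1) by blast
  ultimately show "atoms v \<subseteq> {tt, ff} \<and> atoms v \<noteq> {}" by blast
next
  assume h: "atoms v \<subseteq> {tt, ff} \<and> atoms v \<noteq> {}"
  have cv: "coef v y = 0" if "y \<noteq> tt" "y \<noteq> ff" for y
    using h that by (intro coef_notin) auto
  consider "atoms v = {tt, ff}" | "atoms v = {tt}" | "atoms v = {ff}" using h by blast
  then show "v \<in> Span X"
  proof cases
    case 1
    show ?thesis unfolding Span_def
      apply (rule CollectI, rule exI[of _ "[DT tt, DT ff]"], rule exI[of _ "[coef v tt, coef v ff]"])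
      using 1 assms cv by (auto simp: deq_iff fun_eq_iff)
  next
    case 2
    show ?thesis unfolding Span_def
      apply (rule CollectI, rule exI[of _ "[DT tt]"], rule exI[of _ "[coef v tt]"])
      using 2 assms cv by (auto simp: deq_iff fun_eq_iff coef_notin)
  next
    case 3
    show ?thesis unfolding Span_def
      apply (rule CollectI, rule exI[of _ "[DT ff]"], rule exI[of _ "[coef v ff]"])
      using 3 assms cv by (auto simp: deq_iff fun_eq_iff coef_notin)
  qed
qed

lemma semTB: "sem TB = {x. x \<equiv>\<^sub>d DT tt \<or> x \<equiv>\<^sub>d DT ff}"
proof -
  have l: "dmap inl_t v \<equiv>\<^sub>d DT tt" if "v \<equiv>\<^sub>d DT (Val VStar)" for v
  proof -
    have "dmap inl_t v \<equiv>\<^sub>d dmap inl_t (DT (Val VStar))"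
      unfolding dmap_dbind using that by (rule dbind_deq)
    then show ?thesis by (simp add: inl_t_def tt_def)
  qed
  have r: "dmap inr_t v \<equiv>\<^sub>d DT ff" if "v \<equiv>\<^sub>d DT (Val VStar)" for v
  proof -
    have "dmap inr_t v \<equiv>\<^sub>d dmap inr_t (DT (Val VStar))"
      unfolding dmap_dbind using that by (rule dbind_deq)
    then show ?thesis by (simp add: inr_t_def ff_def)
  qed
  have l2: "DT tt = dmap inl_t (DT (Val VStar))" by (simp add: inl_t_def tt_def)
  have r2: "DT ff = dmap inr_t (DT (Val VStar))" by (simp add: inr_t_def ff_def)
  show ?thesis
  proof (rule set_eqI)
    fix x show "x \<in> sem TB \<longleftrightarrow> x \<in> {x. x \<equiv>\<^sub>d DT tt \<or> x \<equiv>\<^sub>d DT ff}"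
      unfolding TB_def sem.simps
    proof
      assume "x \<in> {d. \<exists>v\<in>{d. d \<equiv>\<^sub>d DT (Val VStar)}. d \<equiv>\<^sub>d dmap inl_t v} \<union> {d. \<exists>w\<in>{d. d \<equiv>\<^sub>d DT (Val VStar)}. d \<equiv>\<^sub>d dmap inr_t w}"
      then show "x \<in> {x. x \<equiv>\<^sub>d DT tt \<or> x \<equiv>\<^sub>d DT ff}" using l r deq_trans by blast
    next
      assume "x \<in> {x. x \<equiv>\<^sub>d DT tt \<or> x \<equiv>\<^sub>d DT ff}"
      then have "x \<equiv>\<^sub>d dmap inl_t (DT (Val VStar)) \<or> x \<equiv>\<^sub>d dmap inr_t (DT (Val VStar))"
        using l2 r2 by simp
      then show "x \<in> {d. \<exists>v\<in>{d. d \<equiv>\<^sub>d DT (Val VStar)}. d \<equiv>\<^sub>d dmap inl_t v} \<union> {d. \<exists>w\<in>{d. d \<equiv>\<^sub>d DT (Val VStar)}. d \<equiv>\<^sub>d dmap inr_t w}"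
        using deq_refl[of "DT (Val VStar)"] by blast
    qed
  qed
qed

lemma SpanB_char: "v \<in> SpanB \<longleftrightarrow> atoms v \<subseteq> {tt, ff} \<and> atoms v \<noteq> {}"
  unfolding SpanB_def by (rule Span_char) auto

lemma dinner_TF:
  assumes "atoms v \<subseteq> {tt, ff}" shows "dinner v v = nrm v"
proof -
  have "dinner v v = (\<Sum>x\<in>atoms v. cnj (coef v x) * coef v x)" by (simp add: dinner_def)
  also have "\<dots> = (\<Sum>x\<in>{tt,ff}. cnj (coef v x) * coef v x)"
    by (rule sum.mono_neutral_left) (use assms in \<open>auto simp: coef_notin\<close>)
  finally show ?thesis by (simp add: nrm_def)
qed

lemma closed_TF: "atoms v \<subseteq> {tt, ff} \<Longrightarrow> closed_val_dist v"
  unfolding closed_val_dist_def by (auto simp: tt_def ff_def is_val_def)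

lemma semB_char: "v \<in> sem (TSharp TB) \<longleftrightarrow> atoms v \<subseteq> {tt, ff} \<and> atoms v \<noteq> {} \<and> nrm v = 1"
proof -
  have "v \<in> Span (sem TB) \<longleftrightarrow> atoms v \<subseteq> {tt, ff} \<and> atoms v \<noteq> {}"
    by (rule Span_char) (auto simp: semTB deq_iff)
  then show ?thesis using dinner_TF closed_TF by (auto simp: S_def)
qed



lemma TF_val: "atoms v \<subseteq> {tt, ff} \<Longrightarrow> \<forall>x\<in>atoms v. is_val x"
  by (auto simp: tt_def ff_def is_val_def)

lemma coef_R_DT:
  "coef (R d (DT tt)) y = P d tt y" "coef (R d (DT ff)) y = P d ff y"
  by (simp_all add: coef_R)


lemma expand3:
  fixes r a b c e :: complex
  assumes rc: "cnj r = r"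
  shows "cnj (r * a + r * c) * (r * a + r * c) + cnj (r * b + r * e) * (r * b + r * e) = r * r * ((cnj a * a + cnj b * b) + (cnj c * c + cnj e * e) + (cnj a * c + cnj b * e) + (cnj c * a + cnj e * b))"
  by (simp add: rc algebra_simps)
lemma expand4:
  fixes r a b c e :: complex
  assumes rc: "cnj r = r"
  shows "cnj (r * a + r * \<i> * c) * (r * a + r * \<i> * c) + cnj (r * b + r * \<i> * e) * (r * b + r * \<i> * e) = r * r * ((cnj a * a + cnj b * b) + (cnj c * c + cnj e * e) + \<i> * (cnj a * c + cnj b * e) - \<i> * (cnj c * a + cnj e * b))"
proof -
  have "cnj (r * a + r * \<i> * c) = r * (cnj a - \<i> * cnj c)" "cnj (r * b + r * \<i> * e) = r * (cnj b - \<i> * cnj e)"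
    by (simp_all add: rc algebra_simps)
  moreover have i2: "\<i> * \<i> = -1" by simp
  ultimately show ?thesis
    by algebra
qed

lemma l1: "(1/2::complex)*(1+1+X+Y) = 1 \<Longrightarrow> X + Y = 0"
  by (simp add: field_simps)
lemma l2: "(1/2::complex)*(1+1+\<i>*X-\<i>*Y) = 1 \<Longrightarrow> X - Y = 0"
proof -
  assume "(1/2::complex)*(1+1+\<i>*X-\<i>*Y) = 1"
  then have "\<i>*(X - Y) = 0" by (simp add: field_simps)
  then show ?thesis by simp
qed
lemma l3: "X + Y = 0 \<Longrightarrow> X - Y = (0::complex) \<Longrightarrow> X = 0 \<and> Y = 0"
  by (metis add_diff_cancel_left' diff_0 diff_add_cancel diff_zero minus_diff_eq mult_2 nonzero_mult_div_cancel_left zero_neq_numeral)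

lemma inner_id:
  fixes a b c e p q p' q' :: complex
  assumes "cnj a * a + cnj b * b = 1" "cnj c * c + cnj e * e = 1"
    "cnj a * c + cnj b * e = 0" "cnj c * a + cnj e * b = 0"
  shows "cnj (p * a + q * c) * (p' * a + q' * c) + cnj (p * b + q * e) * (p' * b + q' * e) = cnj p * p' + cnj q * q'"
proof -
  have "cnj (p * a + q * c) * (p' * a + q' * c) + cnj (p * b + q * e) * (p' * b + q' * e)
    = cnj p * p' * (cnj a * a + cnj b * b) + cnj p * q' * (cnj a * c + cnj b * e)
      + cnj q * p' * (cnj c * a + cnj e * b) + cnj q * q' * (cnj c * c + cnj e * e)"
    by (simp only: complex_cnj_add complex_cnj_mult) algebra
  then show ?thesis using assms by simp
qed

lemma nrm_piB: "nrm w = c2_inner (piB w) (piB w)"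
  by (simp add: nrm_def piB_def c2_inner_def)

lemma ii: "(r::complex) * \<i> * (r * \<i>) = - (r*r)"
proof -
  have "r * \<i> * (r * \<i>) = (r*r) * (\<i>*\<i>)" by (simp only: mult_ac)
  then show ?thesis by simp
qed

theorem mainTheorem2:
  fixes d :: tdist
  assumes "d \<in> S"
    and "\<forall>t\<in>atoms d. is_lam t \<and> closed_t 0 t"
  shows "d \<in> sem (TArr (TSharp TB) (TSharp TB)) \<longleftrightarrow> (\<exists>F. unitary F \<and> represents d F)"
proof -
  have lam: "\<forall>t\<in>atoms d. is_lam t" using assms(2) by blast
  have semArr: "d \<in> sem (TArr (TSharp TB) (TSharp TB)) \<longleftrightarrow>
      (\<forall>v\<in>sem (TSharp TB). \<exists>w\<in>sem (TSharp TB). reds (app_body d v) w)"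
    using assms(1) lam by (simp add: realizes_def)
  have G: "NORM d v \<and> w \<equiv>\<^sub>d R d v" if "reds (app_body d v) w" "w \<in> sem (TSharp TB)" for v w
  proof -
    have "atoms w \<subseteq> {tt, ff}" using that(2) semB_char by blast
    then have "NFd (app_body d v) w" using that(1) reds_NFd TF_val by blast
    then show ?thesis using L1[OF lam] by blast
  qed
  show ?thesis
  proof
    assume "d \<in> sem (TArr (TSharp TB) (TSharp TB))"
    then have H: "\<exists>w. w \<in> sem (TSharp TB) \<and> NORM d v \<and> w \<equiv>\<^sub>d R d v" if "v \<in> sem (TSharp TB)" for v
      using semArr that G by blast
    define r where "r = complex_of_real (1 / sqrt 2)"
    have rc: "cnj r = r" by (simp add: r_def)
    have rr: "r * r = 1/2" unfolding r_def
      by (simp flip: of_real_mult)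
    define v3 where "v3 = DPlus (DScal r (DT tt)) (DScal r (DT ff))"
    define v4 where "v4 = DPlus (DScal r (DT tt)) (DScal (r * \<i>) (DT ff))"
    have s1: "DT tt \<in> sem (TSharp TB)" unfolding semB_char by (simp add: nrm_def)
    have s2: "DT ff \<in> sem (TSharp TB)" unfolding semB_char by (simp add: nrm_def)
    have s3: "v3 \<in> sem (TSharp TB)" unfolding semB_char v3_def nrm_def
      by (simp add: rc rr)
    have s4: "v4 \<in> sem (TSharp TB)" unfolding semB_char v4_def nrm_def
      by (simp add: rc ii rr)
    obtain w1 where w1: "w1 \<in> sem (TSharp TB)" "w1 \<equiv>\<^sub>d R d (DT tt)" using H[OF s1] by blast
    obtain w2 where w2: "w2 \<in> sem (TSharp TB)" "w2 \<equiv>\<^sub>d R d (DT ff)" using H[OF s2] by blast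
    obtain w3 where w3: "w3 \<in> sem (TSharp TB)" "NORM d v3" "w3 \<equiv>\<^sub>d R d v3" using H[OF s3] by blast
    obtain w4 where w4: "w4 \<in> sem (TSharp TB)" "w4 \<equiv>\<^sub>d R d v4" using H[OF s4] by blast
    define a where "a = P d tt tt"
    define b where "b = P d tt ff"
    define c where "c = P d ff tt"
    define e where "e = P d ff ff"
    have cw: "coef w1 = coef (R d (DT tt))" "coef w2 = coef (R d (DT ff))"
      "coef w3 = coef (R d v3)" "coef w4 = coef (R d v4)"
      using w1 w2 w3 w4 by (simp_all add: deq_iff)
    have n1: "nrm w1 = 1" "nrm w2 = 1" "nrm w3 = 1" "nrm w4 = 1"
      using w1 w2 w3 w4 semB_char by blast+
    have at3: "atoms v3 \<subseteq> {tt, ff}" "atoms v4 \<subseteq> {tt, ff}" by (auto simp: v3_def v4_def)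
    have cv3: "coef v3 tt = r" "coef v3 ff = r" "coef v4 tt = r" "coef v4 ff = r * \<i>"
      by (simp_all add: v3_def v4_def)
    have c1: "coef w1 tt = a" "coef w1 ff = b" "coef w2 tt = c" "coef w2 ff = e"
      by (simp_all only: cw coef_R_DT a_def b_def c_def e_def)
    have c3: "coef w3 tt = r * a + r * c" "coef w3 ff = r * b + r * e"
      unfolding cw coef_R[OF at3(1)] cv3 a_def b_def c_def e_def by simp_all
    have c4: "coef w4 tt = r * a + r * \<i> * c" "coef w4 ff = r * b + r * \<i> * e"
      unfolding cw coef_R[OF at3(2)] cv3 a_def b_def c_def e_def by simp_all
    have A1: "cnj a * a + cnj b * b = 1"
      using n1(1) unfolding nrm_def c1 .
    have A2: "cnj c * c + cnj e * e = 1"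
      using n1(2) unfolding nrm_def c1 .
    have A3: "cnj (r * a + r * c) * (r * a + r * c) + cnj (r * b + r * e) * (r * b + r * e) = 1"
      using n1(3) unfolding nrm_def c3 .
    have A4: "cnj (r * a + r * \<i> * c) * (r * a + r * \<i> * c) + cnj (r * b + r * \<i> * e) * (r * b + r * \<i> * e) = 1"
      using n1(4) unfolding nrm_def c4 .
    have E3: "r * r * ((cnj a * a + cnj b * b) + (cnj c * c + cnj e * e) + (cnj a * c + cnj b * e) + (cnj c * a + cnj e * b)) = 1"
      using A3 unfolding expand3[OF rc] .
    have E4: "r * r * ((cnj a * a + cnj b * b) + (cnj c * c + cnj e * e) + \<i> * (cnj a * c + cnj b * e) - \<i> * (cnj c * a + cnj e * b)) = 1"
      using A4 unfolding expand4[OF rc] .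
    have XY1: "(cnj a * c + cnj b * e) + (cnj c * a + cnj e * b) = 0"
      using E3 unfolding A1 A2 rr by (rule l1)
    have XY2: "(cnj a * c + cnj b * e) - (cnj c * a + cnj e * b) = 0"
      using E4 unfolding A1 A2 rr by (rule l2)
    have X: "cnj a * c + cnj b * e = 0" and Y: "cnj c * a + cnj e * b = 0"
      using l3[OF XY1 XY2] by auto
    define F where "F = (\<lambda>u::complex \<times> complex. (fst u * a + snd u * c, fst u * b + snd u * e))"
    have unit: "unitary F"
      unfolding unitary_def c2_linear_def c2_inner_def F_def
      using inner_id[OF A1 A2 X Y] by (simp add: algebra_simps)
    have atv3: "atoms v3 = {tt, ff}" by (auto simp: v3_def)
    have rep: "represents d F"
      unfolding represents_def
    proof
      fix v assume "v \<in> SpanB"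
      then have at: "atoms v \<subseteq> {tt, ff}" and ne: "atoms v \<noteq> {}" by (auto simp: SpanB_char)
      have nv: "NORM d v" using w3(2) at atv3 unfolding NORM_def by blast
      have "NFd (dapp d v) (R d v)" using L2[OF lam TF_val[OF at]] nv by simp
      then have red: "reds (dapp d v) (R d v)" by (rule NFd_reds)
      have aw: "atoms (R d (DT tt)) = atoms w1" "atoms (R d (DT ff)) = atoms w2"
        using w1 w2 by (simp_all add: deq_iff)
      have aw2: "atoms w1 \<subseteq> {tt, ff}" "atoms w1 \<noteq> {}" "atoms w2 \<subseteq> {tt, ff}" "atoms w2 \<noteq> {}"
        using w1(1) w2(1) semB_char by blast+
      have sub: "atoms (R d v) \<subseteq> {tt, ff}"
        unfolding atoms_R[of d v] using at aw aw2 by blast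
      obtain x where x: "x \<in> atoms v" using ne by blast
      have "atoms (R d (DT x)) \<noteq> {}" using x at aw aw2 by blast
      then have "atoms (R d v) \<noteq> {}" unfolding atoms_R[of d v] using x by blast
      then have inB: "R d v \<in> SpanB" using sub by (simp add: SpanB_char)
      have "piB (R d v) = F (piB v)"
        unfolding piB_def F_def coef_R[OF at] a_def b_def c_def e_def by simp
      then show "\<exists>w\<in>SpanB. reds (dapp d v) w \<and> piB w = F (piB v)"
        using inB red by blast
    qed
    show "\<exists>F. unitary F \<and> represents d F" using unit rep by blast
  next
    assume "\<exists>F. unitary F \<and> represents d F"
    then obtain F where unit: "unitary F" and rep: "represents d F" by blast
    have "\<exists>w\<in>sem (TSharp TB). reds (app_body d v) w" if v: "v \<in> sem (TSharp TB)" for v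
    proof -
      have atv: "atoms v \<subseteq> {tt, ff}" "atoms v \<noteq> {}" "nrm v = 1" using v semB_char by blast+
      then have "v \<in> SpanB" by (simp add: SpanB_char)
      then obtain w where w: "w \<in> SpanB" "reds (dapp d v) w" "piB w = F (piB v)"
        using rep unfolding represents_def by blast
      have atw: "atoms w \<subseteq> {tt, ff}" "atoms w \<noteq> {}" using w(1) SpanB_char by blast+
      have "NFd (dapp d v) w" using w(2) reds_NFd TF_val[OF atw(1)] by blast
      then have "NORM d v \<and> w \<equiv>\<^sub>d R d v" using L2[OF lam TF_val[OF atv(1)]] by blast
      then have "NFd (app_body d v) w" using L1[OF lam] by blast
      then have red: "reds (app_body d v) w" by (rule NFd_reds)
      have "nrm w = nrm v"
        unfolding nrm_piB w(3) using unit unfolding unitary_def by blast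
      then have "w \<in> sem (TSharp TB)" using atw atv(3) semB_char by simp
      then show ?thesis using red by blast
    qed
    then show "d \<in> sem (TArr (TSharp TB) (TSharp TB))" using semArr by blast
  qed
qed


end
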